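(* The vector space $M(\beta)/(Z_1,\dots,Z_d)M(\beta)$ is finite dimensional.
   Context: $N\cong\mathbb Z^d$ lattice, $M=\mathrm{Hom}(N,\mathbb Z)$ with basis $m_1,\dots,m_d$; $\mathcal A=\{v_1,\dots,v_n\}\subset N$ generating $N$ with a homomorphism $\mathrm h:N\to\mathbb Z$, $\mathrm h(v_j)=1$; $K=\mathbb R_{\ge0}\mathrm{Conv}(\mathcal A)$; $\Sigma$ the simplicial fan supported on $K$ from a regular triangulation of $\mathrm{Conv}(\mathcal A)$ with vertices in $\mathcal A$; $\beta\in N$. $\mathbb C[K,\Sigma]$: basis $x^w$ ($w\in K\cap N$), $x^{w_1}x^{w_2}=x^{w_1+w_2}$ if a cone of $\Sigma$ contains both, else $0$. $Z_i=\sum_{j:\mathbb R_{\ge0}v_j\in\Sigma}\langle m_i,v_j\rangle x^{v_j}$. $\mathrm{Box}(\Sigma)$: $v\in N$, $v=\sum q_jv_j$, $0\le q_j<1$, $q_j=0$ unless $v_j$ spans a ray of one fixed maximal cone; $\sigma(v)$ smallest cone containing $v$. $R$: subring generated by $x^{v_j}$, $\mathbb R_{\ge0}v_j\in\Sigma$. $M(\beta)$: $R$-submodule generated by $x^v\prod_{j:r_j<0,\ \mathbb R_{\ge0}v_j\in\Sigma,\ \mathbb R_{\ge0}v_j\not\prec\sigma(v)}x^{v_j}$ over all $v\in\mathrm{Box}(\Sigma)$, $r\in\mathbb Z^n$ with $v+\sum r_jv_j=\beta$, $r_j\ge0$ whenever $\mathbb R_{\ge0}v_j\notin\Sigma$.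 *)

theory Defs
  imports "HOL-Analysis.Analysis"
begin

text \<open>The lattice N is Z^d, realised inside real^'d (d = CARD('d)); M = Hom(N,Z)
  with the dual basis m_i, so that the pairing of m_i with v is the coordinate v $ i.\<close>

definition latN :: "(real^'d) set" where
  "latN = {x. \<forall>i. x $ i \<in> \<int>}"

definition generates_lattice :: "(real^'d) set \<Rightarrow> bool" where
  "generates_lattice A \<longleftrightarrow>
     (\<forall>x\<in>latN. \<exists>c :: real^'d \<Rightarrow> int. x = (\<Sum>a\<in>A. of_int (c a) *\<^sub>R a))"

definition conic :: "(real^'d) set \<Rightarrow> (real^'d) set" where
  "conic \<tau> = {(\<Sum>a\<in>\<tau>. c a *\<^sub>R a) | c. \<forall>a\<in>\<tau>. 0 \<le> c a}"

definition ray :: "real^'d \<Rightarrow> (real^'d) set" where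
  "ray v = {t *\<^sub>R v | t. 0 \<le> t}"

definition coneK :: "(real^'d) set \<Rightarrow> (real^'d) set" where
  "coneK A = {t *\<^sub>R x | t x. 0 \<le> t \<and> x \<in> convex hull A}"

text \<open>A triangulation of Conv(A) with vertices in A, given by the vertex sets of its
  maximal simplices.\<close>
definition is_triangulation :: "(real^'d) set \<Rightarrow> (real^'d) set set \<Rightarrow> bool" where
  "is_triangulation A T \<longleftrightarrow>
     finite T \<and>
     (\<forall>S\<in>T. S \<subseteq> A \<and> \<not> affine_dependent S \<and>
              aff_dim (convex hull S) = aff_dim (convex hull A)) \<and>
     (\<Union>S\<in>T. convex hull S) = convex hull A \<and>
     (\<forall>S1\<in>T. \<forall>S2\<in>T. convex hull S1 \<inter> convex hull S2 = convex hull (S1 \<inter> S2))"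

text \<open>Regularity: induced by a height function \<omega> on A (the maximal cells are exactly
  the projections of the lower facets of the lifted configuration).\<close>
definition is_regular_triangulation :: "(real^'d) set \<Rightarrow> (real^'d) set set \<Rightarrow> bool" where
  "is_regular_triangulation A T \<longleftrightarrow>
     is_triangulation A T \<and>
     (\<exists>\<omega> :: real^'d \<Rightarrow> real. \<forall>S\<in>T. \<exists>(\<psi>::real^'d) (c::real).
        (\<forall>a\<in>S. \<psi> \<bullet> a + c = \<omega> a) \<and> (\<forall>a\<in>A - S. \<psi> \<bullet> a + c < \<omega> a))"

definition fan :: "(real^'d) set set \<Rightarrow> (real^'d) set set" where
  "fan T = {conic \<tau> | \<tau>. \<exists>S\<in>T. \<tau> \<subseteq> S}"

text \<open>Elements of C[K,Sigma] are finitely supported functions N -> C supported on K \<inter> N;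
  x^w is the indicator of w.\<close>
definition mono :: "real^'d \<Rightarrow> (real^'d \<Rightarrow> complex)" where
  "mono w = (\<lambda>u. if u = w then 1 else 0)"

definition supp :: "(real^'d \<Rightarrow> complex) \<Rightarrow> (real^'d) set" where
  "supp f = {x. f x \<noteq> 0}"

definition ring_KSigma :: "(real^'d) set \<Rightarrow> (real^'d) set set \<Rightarrow> (real^'d \<Rightarrow> complex) set" where
  "ring_KSigma K \<Sigma> = {f. finite (supp f) \<and> supp f \<subseteq> K \<inter> latN}"

text \<open>Multiplication: bilinear extension of x^w1 x^w2 = x^(w1+w2) if some cone of Sigma
  contains both w1 and w2, and 0 otherwise.\<close>
definition fmul :: "(real^'d) set set \<Rightarrow> (real^'d \<Rightarrow> complex) \<Rightarrow> (real^'d \<Rightarrow> complex) \<Rightarrow> (real^'d \<Rightarrow> complex)" where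
  "fmul \<Sigma> f g = (\<lambda>w. \<Sum>p\<in>{p \<in> supp f \<times> supp g. fst p + snd p = w \<and>
                                   (\<exists>\<sigma>\<in>\<Sigma>. fst p \<in> \<sigma> \<and> snd p \<in> \<sigma>)}.
                      f (fst p) * g (snd p))"

fun lprod :: "(real^'d) set set \<Rightarrow> (real^'d \<Rightarrow> complex) list \<Rightarrow> (real^'d \<Rightarrow> complex)" where
  "lprod \<Sigma> [] = mono 0"
| "lprod \<Sigma> (f # fs) = fmul \<Sigma> f (lprod \<Sigma> fs)"

definition cspan :: "(real^'d \<Rightarrow> complex) set \<Rightarrow> (real^'d \<Rightarrow> complex) set" where
  "cspan S = {f. \<exists>F c. finite F \<and> F \<subseteq> S \<and> f = (\<lambda>u. \<Sum>s\<in>F. c s * s u)}"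

definition Zgen :: "(real^'d) set \<Rightarrow> (real^'d) set set \<Rightarrow> 'd \<Rightarrow> (real^'d \<Rightarrow> complex)" where
  "Zgen A \<Sigma> i = (\<lambda>u. \<Sum>a\<in>{a\<in>A. ray a \<in> \<Sigma>}. complex_of_real (a $ i) * mono a u)"

inductive_set Rring :: "(real^'d) set \<Rightarrow> (real^'d) set set \<Rightarrow> (real^'d \<Rightarrow> complex) set"
  for A :: "(real^'d) set" and \<Sigma> :: "(real^'d) set set" where
  one: "mono 0 \<in> Rring A \<Sigma>"
| gen: "a \<in> A \<Longrightarrow> ray a \<in> \<Sigma> \<Longrightarrow> mono a \<in> Rring A \<Sigma>"
| add: "f \<in> Rring A \<Sigma> \<Longrightarrow> g \<in> Rring A \<Sigma> \<Longrightarrow> (\<lambda>u. f u + g u) \<in> Rring A \<Sigma>"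
| smult: "f \<in> Rring A \<Sigma> \<Longrightarrow> (\<lambda>u. c * f u) \<in> Rring A \<Sigma>"
| mult: "f \<in> Rring A \<Sigma> \<Longrightarrow> g \<in> Rring A \<Sigma> \<Longrightarrow> fmul \<Sigma> f g \<in> Rring A \<Sigma>"

definition Box :: "(real^'d) set set \<Rightarrow> (real^'d) set" where
  "Box T = {v \<in> latN. \<exists>S\<in>T. \<exists>q :: real^'d \<Rightarrow> real.
              (\<forall>a\<in>S. 0 \<le> q a \<and> q a < 1) \<and> v = (\<Sum>a\<in>S. q a *\<^sub>R a)}"

definition min_cone :: "(real^'d) set set \<Rightarrow> real^'d \<Rightarrow> (real^'d) set" where
  "min_cone \<Sigma> v = (THE \<sigma>. \<sigma> \<in> \<Sigma> \<and> v \<in> \<sigma> \<and> (\<forall>\<tau>\<in>\<Sigma>. v \<in> \<tau> \<longrightarrow> \<sigma> \<subseteq> \<tau>))"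

text \<open>Generators of M(beta): x^v times the product of x^(v_j) over the indicated j
  (the product is taken in any order, as a list enumerating the index set).\<close>
definition Mgens :: "(real^'d) set \<Rightarrow> (real^'d) set set \<Rightarrow> real^'d \<Rightarrow> (real^'d \<Rightarrow> complex) set" where
  "Mgens A T \<beta> = {fmul (fan T) (mono v) (lprod (fan T) (map mono xs)) | v r xs.
      v \<in> Box T \<and>
      v + (\<Sum>a\<in>A. of_int (r a) *\<^sub>R a) = \<beta> \<and>
      (\<forall>a\<in>A. ray a \<notin> fan T \<longrightarrow> 0 \<le> (r a :: int)) \<and>
      distinct xs \<and>
      set xs = {a\<in>A. r a < 0 \<and> ray a \<in> fan T \<and> \<not> (ray a face_of min_cone (fan T) v)}}"

inductive_set Mbeta :: "(real^'d) set \<Rightarrow> (real^'d) set set \<Rightarrow> real^'d \<Rightarrow> (real^'d \<Rightarrow> complex) set"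
  for A :: "(real^'d) set" and T :: "(real^'d) set set" and \<beta> :: "real^'d" where
  gen: "g \<in> Mgens A T \<beta> \<Longrightarrow> g \<in> Mbeta A T \<beta>"
| zero: "(\<lambda>u. 0) \<in> Mbeta A T \<beta>"
| add: "f \<in> Mbeta A T \<beta> \<Longrightarrow> g \<in> Mbeta A T \<beta> \<Longrightarrow> (\<lambda>u. f u + g u) \<in> Mbeta A T \<beta>"
| rmult: "r \<in> Rring A (fan T) \<Longrightarrow> f \<in> Mbeta A T \<beta> \<Longrightarrow> fmul (fan T) r f \<in> Mbeta A T \<beta>"

definition ZM :: "(real^'d) set \<Rightarrow> (real^'d) set set \<Rightarrow> real^'d \<Rightarrow> (real^'d \<Rightarrow> complex) set" where
  "ZM A T \<beta> = cspan {fmul (fan T) (Zgen A (fan T) i) m | i m. m \<in> Mbeta A T \<beta>}"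

definition fin_dim_quotient :: "(real^'d \<Rightarrow> complex) set \<Rightarrow> (real^'d \<Rightarrow> complex) set \<Rightarrow> bool" where
  "fin_dim_quotient V W \<longleftrightarrow>
     (\<exists>B. finite B \<and> B \<subseteq> V \<and> (\<forall>m\<in>V. \<exists>b\<in>cspan B. (\<lambda>u. m u - b u) \<in> W))"

end

theory Submission
  imports Defs
begin

definition ccT :: "(real^'d) set set \<Rightarrow> real^'d \<Rightarrow> real^'d \<Rightarrow> bool" where
  "ccT T x y \<longleftrightarrow> (\<exists>S\<in>T. x \<in> conic S \<and> y \<in> conic S)"

lemma conicI: "(\<And>a. a \<in> S \<Longrightarrow> 0 \<le> c a) \<Longrightarrow> (\<Sum>a\<in>S. c a *\<^sub>R a) \<in> conic S"
  unfolding conic_def by blast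

lemma conicI': "(\<And>a. a \<in> S \<Longrightarrow> 0 \<le> c a) \<Longrightarrow> x = (\<Sum>a\<in>S. c a *\<^sub>R a) \<Longrightarrow> x \<in> conic S"
  using conicI by blast

lemma conicE: "x \<in> conic S \<Longrightarrow> (\<And>c. (\<forall>a\<in>S. 0 \<le> c a) \<Longrightarrow> x = (\<Sum>a\<in>S. c a *\<^sub>R a) \<Longrightarrow> P) \<Longrightarrow> P"
  unfolding conic_def by blast

lemma conic_sum_sub:
  fixes S :: "(real^'d) set"
  assumes "finite S" "F \<subseteq> S"
  shows "(\<Sum>s\<in>F. c s *\<^sub>R s) = (\<Sum>s\<in>S. (if s \<in> F then c s else 0) *\<^sub>R s)"
proof -
  have "(\<Sum>s\<in>S. (if s \<in> F then c s else 0) *\<^sub>R s) = (\<Sum>s\<in>S. (if s \<in> F then c s *\<^sub>R s else 0))"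
    by (intro sum.cong) simp_all
  also have "\<dots> = (\<Sum>s\<in>S \<inter> F. c s *\<^sub>R s)"
    by (simp add: sum.inter_restrict[OF assms(1)])
  also have "S \<inter> F = F" using assms(2) by blast
  finally show ?thesis by simp
qed

lemma conic_mono: "finite (S::(real^'d) set) \<Longrightarrow> F \<subseteq> S \<Longrightarrow> conic F \<subseteq> conic S"
proof
  fix x assume fs: "finite S" "F \<subseteq> S" and x: "x \<in> conic F"
  then obtain c where c: "\<forall>a\<in>F. 0 \<le> c a" "x = (\<Sum>a\<in>F. c a *\<^sub>R a)" unfolding conic_def by blast
  have e: "x = (\<Sum>s\<in>S. (if s \<in> F then c s else 0) *\<^sub>R s)"
    using c(2) conic_sum_sub[OF fs, of c] by simp
  have "\<forall>s\<in>S. 0 \<le> (if s \<in> F then c s else 0)" using c(1) by simp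
  with e show "x \<in> conic S" by (intro conicI'[of S "\<lambda>s. if s \<in> F then c s else 0"]) auto
qed

lemma conic_0: "(0::real^'d) \<in> conic S"
  by (intro conicI'[of _ "\<lambda>_. 0"]) auto

lemma conic_add: "x \<in> conic S \<Longrightarrow> y \<in> conic S \<Longrightarrow> x + y \<in> conic S"
proof -
  assume "x \<in> conic S" "y \<in> conic S"
  then obtain c d where "\<forall>a\<in>S. 0 \<le> c a" "x = (\<Sum>a\<in>S. c a *\<^sub>R a)" "\<forall>a\<in>S. 0 \<le> d a" "y = (\<Sum>a\<in>S. d a *\<^sub>R a)"
    unfolding conic_def by blast
  then show ?thesis
    by (intro conicI'[of _ "\<lambda>s. c s + d s"]) (auto simp: scaleR_add_left sum.distrib)
qed

lemma conic_scale: "x \<in> conic S \<Longrightarrow> 0 \<le> t \<Longrightarrow> t *\<^sub>R x \<in> conic S"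
proof -
  assume "x \<in> conic S" "0 \<le> t"
  then obtain c where "\<forall>a\<in>S. 0 \<le> c a" "x = (\<Sum>a\<in>S. c a *\<^sub>R a)"
    unfolding conic_def by blast
  then show ?thesis using \<open>0 \<le> t\<close>
    by (intro conicI'[of _ "\<lambda>s. t * c s"]) (auto simp: scaleR_sum_right)
qed

lemma conic_elem: "finite S \<Longrightarrow> a \<in> S \<Longrightarrow> a \<in> conic S"
proof -
  assume fa: "finite S" "a \<in> S"
  have "(\<Sum>s\<in>S. (if s = a then 1 else 0) *\<^sub>R s) = (\<Sum>s\<in>S. if s = a then s else 0)"
    by (rule sum.cong) simp_all
  also have "\<dots> = a" using fa by simp
  finally show ?thesis
    by (intro conicI'[of _ "\<lambda>s. if s = a then 1 else 0"]) auto
qed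

locale trig =
  fixes A :: "(real^'d) set" and T :: "(real^'d) set set" and h :: "real^'d"
  assumes finA: "finite A" and hA: "\<forall>a\<in>A. h \<bullet> a = 1"
    and tri: "is_triangulation A T"
begin

lemma T_sub: "S \<in> T \<Longrightarrow> S \<subseteq> A"
  using tri unfolding is_triangulation_def by blast

lemma T_indep: "S \<in> T \<Longrightarrow> \<not> affine_dependent S"
  using tri unfolding is_triangulation_def by blast

lemma T_fin: "S \<in> T \<Longrightarrow> finite S"
  using T_sub finA finite_subset by blast

lemma T_hull: "S1 \<in> T \<Longrightarrow> S2 \<in> T \<Longrightarrow> convex hull S1 \<inter> convex hull S2 = convex hull (S1 \<inter> S2)"
  using tri unfolding is_triangulation_def by blast

lemma uniq:
  assumes S: "S \<in> T" and eq: "(\<Sum>s\<in>S. f s *\<^sub>R s) = (\<Sum>s\<in>S. g s *\<^sub>R s)"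
  shows "\<forall>s\<in>S. f s = g s"
proof -
  have fin: "finite S" using T_fin S .
  let ?U = "\<lambda>s. f s - g s"
  have z: "(\<Sum>s\<in>S. ?U s *\<^sub>R s) = 0"
    using eq by (simp add: scaleR_diff_left sum_subtractf)
  have "h \<bullet> (\<Sum>s\<in>S. ?U s *\<^sub>R s) = (\<Sum>s\<in>S. ?U s * (h \<bullet> s))"
    by (simp add: inner_sum_right)
  also have "\<dots> = (\<Sum>s\<in>S. ?U s)"
    using hA T_sub[OF S] by (intro sum.cong) auto
  finally have "sum ?U S = 0" using z by simp
  then show ?thesis
    using T_indep[OF S] z affine_dependent_explicit_finite[OF fin] by force
qed

lemma FF:
  assumes S1: "S1 \<in> T" and S2: "S2 \<in> T" and x1: "x \<in> conic S1" and x2: "x \<in> conic S2"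
  shows "x \<in> conic (S1 \<inter> S2)"
proof -
  have f1: "finite S1" and f2: "finite S2" using T_fin S1 S2 by auto
  obtain a where a: "\<forall>s\<in>S1. 0 \<le> a s" "x = (\<Sum>s\<in>S1. a s *\<^sub>R s)" using x1 unfolding conic_def by blast
  obtain b where b: "\<forall>s\<in>S2. 0 \<le> b s" "x = (\<Sum>s\<in>S2. b s *\<^sub>R s)" using x2 unfolding conic_def by blast
  have ha: "h \<bullet> x = sum a S1"
    using a hA T_sub[OF S1] by (auto simp: inner_sum_right intro!: sum.cong)
  have hb: "h \<bullet> x = sum b S2"
    using b hA T_sub[OF S2] by (auto simp: inner_sum_right intro!: sum.cong)
  show ?thesis
  proof (cases "h \<bullet> x = 0")
    case True
    then have "\<forall>s\<in>S1. a s = 0" using ha a(1) sum_nonneg_eq_0_iff[OF f1] by auto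
    then have "x = 0" using a(2) by simp
    then show ?thesis by (simp add: conic_0)
  next
    case False
    define t where "t = h \<bullet> x"
    have tpos: "t > 0" using False ha a(1) sum_nonneg[of S1 a] unfolding t_def by force
    have "(1/t) *\<^sub>R x \<in> convex hull S1"
      unfolding convex_hull_finite[OF f1]
      using a tpos ha unfolding t_def
      by (intro CollectI exI[of _ "\<lambda>s. a s / (h \<bullet> x)"])
         (auto simp: scaleR_sum_right sum_divide_distrib[symmetric])
    moreover have "(1/t) *\<^sub>R x \<in> convex hull S2"
      unfolding convex_hull_finite[OF f2]
      using b tpos hb unfolding t_def
      by (intro CollectI exI[of _ "\<lambda>s. b s / (h \<bullet> x)"])
         (auto simp: scaleR_sum_right sum_divide_distrib[symmetric])
    ultimately have "(1/t) *\<^sub>R x \<in> convex hull (S1 \<inter> S2)" using T_hull[OF S1 S2] by blast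
    then obtain u where u: "\<forall>s\<in>S1 \<inter> S2. 0 \<le> u s" "(\<Sum>s\<in>S1 \<inter> S2. u s *\<^sub>R s) = (1/t) *\<^sub>R x"
      unfolding convex_hull_finite[OF finite_Int[OF disjI1[OF f1]]] by blast
    have "x = t *\<^sub>R ((1/t) *\<^sub>R x)" using tpos by simp
    also have "\<dots> = t *\<^sub>R (\<Sum>s\<in>S1 \<inter> S2. u s *\<^sub>R s)" using u(2) by simp
    also have "\<dots> = (\<Sum>s\<in>S1 \<inter> S2. (t * u s) *\<^sub>R s)" by (simp add: scaleR_sum_right)
    finally have xe: "x = (\<Sum>s\<in>S1 \<inter> S2. (t * u s) *\<^sub>R s)" .
    show ?thesis
    proof (rule conicI'[OF _ xe])
      fix s assume "s \<in> S1 \<inter> S2"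
      then show "0 \<le> t * u s" using u(1) tpos by simp
    qed
  qed
qed

end

context trig begin

lemma core:
  assumes S1: "S1 \<in> T" and S2: "S2 \<in> T" and F: "F \<subseteq> S1" and c: "\<forall>s\<in>F. 0 < c s"
    and p: "(\<Sum>s\<in>F. c s *\<^sub>R s) \<in> conic S2"
  shows "F \<subseteq> S2"
proof
  fix s0 assume s0: "s0 \<in> F"
  have f1: "finite S1" using T_fin S1 by auto
  let ?p = "\<Sum>s\<in>F. c s *\<^sub>R s"
  have "?p \<in> conic F" unfolding conic_def using c by (auto intro: less_imp_le)
  then have "?p \<in> conic S1" using conic_mono[OF f1 F] by blast
  then have "?p \<in> conic (S1 \<inter> S2)" using FF[OF S1 S2] p by blast
  then obtain e where e: "\<forall>s\<in>S1 \<inter> S2. 0 \<le> e s" "?p = (\<Sum>s\<in>S1 \<inter> S2. e s *\<^sub>R s)"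
    unfolding conic_def by blast
  have "(\<Sum>s\<in>S1. (if s \<in> F then c s else 0) *\<^sub>R s) = (\<Sum>s\<in>S1. (if s \<in> S1 \<inter> S2 then e s else 0) *\<^sub>R s)"
    using conic_sum_sub[OF f1 F, of c] conic_sum_sub[OF f1, of "S1 \<inter> S2" e] e(2) by auto
  from uniq[OF S1 this] have "\<forall>s\<in>S1. (if s \<in> F then c s else 0) = (if s \<in> S1 \<inter> S2 then e s else 0)" .
  then have "(if s0 \<in> S1 \<inter> S2 then e s0 else 0) = c s0" using s0 F by (metis subsetD)
  then show "s0 \<in> S2" using c s0 by (metis less_irrefl IntD2)
qed

lemma vertex:
  assumes S1: "S1 \<in> T" and S2: "S2 \<in> T" and b: "b \<in> S1" and bc: "b \<in> conic S2"
  shows "b \<in> S2"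
proof -
  have "(\<Sum>s\<in>{b}. (\<lambda>_. 1::real) s *\<^sub>R s) = b" by simp
  then show ?thesis using core[OF S1 S2, of "{b}" "\<lambda>_. 1"] b bc by auto
qed

lemma Gsplit:
  assumes S1: "S1 \<in> T" and S2: "S2 \<in> T" and x: "x \<in> conic S1" and y: "y \<in> conic S1"
    and xy: "x + y \<in> conic S2"
  shows "x \<in> conic S2"
proof -
  have f1: "finite S1" using T_fin S1 by auto
  obtain a where a: "\<forall>s\<in>S1. 0 \<le> a s" "x = (\<Sum>s\<in>S1. a s *\<^sub>R s)" using x unfolding conic_def by blast
  obtain b where b: "\<forall>s\<in>S1. 0 \<le> b s" "y = (\<Sum>s\<in>S1. b s *\<^sub>R s)" using y unfolding conic_def by blast
  have "x + y \<in> conic S1" using conic_add x y by blast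
  then have "x + y \<in> conic (S1 \<inter> S2)" using FF[OF S1 S2] xy by blast
  then obtain e where e: "\<forall>s\<in>S1 \<inter> S2. 0 \<le> e s" "x + y = (\<Sum>s\<in>S1 \<inter> S2. e s *\<^sub>R s)"
    unfolding conic_def by blast
  have "(\<Sum>s\<in>S1. (a s + b s) *\<^sub>R s) = (\<Sum>s\<in>S1. (if s \<in> S1 \<inter> S2 then e s else 0) *\<^sub>R s)"
    using conic_sum_sub[OF f1, of "S1 \<inter> S2" e] e(2) a(2) b(2)
    by (simp add: scaleR_add_left sum.distrib)
  from uniq[OF S1 this] have ab: "\<forall>s\<in>S1. a s + b s = (if s \<in> S1 \<inter> S2 then e s else 0)" .
  have a0: "\<forall>s\<in>S1. s \<notin> S1 \<inter> S2 \<longrightarrow> a s = 0"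
  proof (intro ballI impI)
    fix s assume "s \<in> S1" "s \<notin> S1 \<inter> S2"
    then show "a s = 0" using ab a(1) b(1) by (metis add_nonneg_eq_0_iff)
  qed
  have "x = (\<Sum>s\<in>S1. (if s \<in> S1 \<inter> S2 then a s else 0) *\<^sub>R s)"
    using a(2) a0 by (intro trans[OF a(2)] sum.cong) auto
  also have "\<dots> = (\<Sum>s\<in>S1 \<inter> S2. a s *\<^sub>R s)"
    using conic_sum_sub[OF f1, of "S1 \<inter> S2" a] by simp
  finally have "x \<in> conic (S1 \<inter> S2)" unfolding conic_def using a(1) by auto
  then show ?thesis using conic_mono[of S2 "S1 \<inter> S2"] T_fin[OF S2] by blast
qed

lemma conic_single: "conic {s} = ray s"
  unfolding conic_def ray_def by auto

lemma ray_in_T: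
  assumes a: "a \<in> A" and r: "ray a \<in> fan T"
  shows "\<exists>S\<in>T. a \<in> S"
proof -
  obtain \<tau> S where tS: "ray a = conic \<tau>" "S \<in> T" "\<tau> \<subseteq> S" using r unfolding fan_def by blast
  have ha: "h \<bullet> a = 1" using hA a by blast
  have "a \<in> ray a" unfolding ray_def by (auto intro!: exI[of _ 1])
  then have ac: "a \<in> conic \<tau>" using tS by simp
  have "\<tau> \<noteq> {}"
  proof
    assume "\<tau> = {}"
    then have "a = 0" using ac unfolding conic_def by simp
    then show False using ha by simp
  qed
  then obtain s where s: "s \<in> \<tau>" by blast
  have fS: "finite \<tau>" using T_fin[OF tS(2)] tS(3) finite_subset by blast
  have "s \<in> ray a" using conic_elem[OF fS s] tS(1) by simp
  then obtain t where t: "s = t *\<^sub>R a" unfolding ray_def by blast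
  have "h \<bullet> s = 1" using hA T_sub[OF tS(2)] tS(3) s by blast
  then have "t = 1" using t ha by simp
  then have "s = a" using t by simp
  then show ?thesis using s tS by blast
qed

lemma T_ray: "S \<in> T \<Longrightarrow> s \<in> S \<Longrightarrow> ray s \<in> fan T"
  unfolding fan_def using conic_single by blast

lemma cc_fan: "(\<exists>\<sigma>\<in>fan T. x \<in> \<sigma> \<and> y \<in> \<sigma>) \<longleftrightarrow> ccT T x y"
proof
  assume "\<exists>\<sigma>\<in>fan T. x \<in> \<sigma> \<and> y \<in> \<sigma>"
  then obtain \<tau> S where "x \<in> conic \<tau>" "y \<in> conic \<tau>" "S \<in> T" "\<tau> \<subseteq> S" unfolding fan_def by blast
  then show "ccT T x y" unfolding ccT_def using conic_mono[of S \<tau>] T_fin by blast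
next
  assume "ccT T x y"
  then show "\<exists>\<sigma>\<in>fan T. x \<in> \<sigma> \<and> y \<in> \<sigma>" unfolding ccT_def fan_def by blast
qed

lemma indepT: "S \<in> T \<Longrightarrow> independent S"
proof -
  assume S: "S \<in> T"
  have fin: "finite S" using T_fin S .
  show ?thesis
  proof (rule ccontr)
    assume "\<not> independent S"
    then obtain u where u: "\<exists>v\<in>S. u v \<noteq> 0" "(\<Sum>v\<in>S. u v *\<^sub>R v) = 0"
      using dependent_finite[OF fin] by auto
    have "(\<Sum>v\<in>S. u v *\<^sub>R v) = (\<Sum>v\<in>S. (\<lambda>_. 0) v *\<^sub>R v)" using u(2) by simp
    from uniq[OF S this] u(1) show False by simp
  qed
qed

lemma dual:
  assumes S: "S \<in> T" and F: "F \<subseteq> S" and a: "a \<in> F"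
  shows "\<exists>l :: 'd \<Rightarrow> real. \<forall>b\<in>F. (\<Sum>i\<in>UNIV. l i * b $ i) = (if b = a then 1 else 0)"
proof -
  have "independent F" using indepT[OF S] F independent_mono by blast
  then obtain g :: "real^'d \<Rightarrow> real" where g: "linear g" "\<forall>x\<in>F. g x = (if x = a then 1 else 0)"
    using linear_independent_extend[of F "\<lambda>x. if x = a then (1::real) else 0"] by auto
  have "\<forall>b. (\<Sum>i\<in>UNIV. g (axis i 1) * b $ i) = g b"
  proof
    fix b :: "real^'d"
    have "g b = g (\<Sum>i\<in>UNIV. b $ i *\<^sub>R axis i 1)"
      using basis_expansion[of b] by (simp add: scalar_mult_eq_scaleR)
    also have "\<dots> = (\<Sum>i\<in>UNIV. b $ i * g (axis i 1))"
      using g(1) by (simp add: linear_sum linear_scale)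
    finally show "(\<Sum>i\<in>UNIV. g (axis i 1) * b $ i) = g b" by (simp add: mult.commute)
  qed
  then show ?thesis using g(2) by (intro exI[of _ "\<lambda>i. g (axis i 1)"]) auto
qed

end

definition ccS :: "(real^'d) set set \<Rightarrow> real^'d \<Rightarrow> real^'d \<Rightarrow> bool" where
  "ccS \<Sigma> x y \<longleftrightarrow> (\<exists>\<sigma>\<in>\<Sigma>. x \<in> \<sigma> \<and> y \<in> \<sigma>)"

lemma fmul_expand:
  assumes X: "finite X" and Y: "finite Y" and sf: "supp f \<subseteq> X" and sg: "supp g \<subseteq> Y"
  shows "fmul \<Sigma> f g w = (\<Sum>x\<in>X. \<Sum>y\<in>Y. if x + y = w \<and> ccS \<Sigma> x y then f x * g y else 0)"
proof -
  let ?P = "{p \<in> supp f \<times> supp g. fst p + snd p = w \<and> (\<exists>\<sigma>\<in>\<Sigma>. fst p \<in> \<sigma> \<and> snd p \<in> \<sigma>)}"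
  let ?G = "\<lambda>p. if fst p + snd p = w \<and> ccS \<Sigma> (fst p) (snd p) then f (fst p) * g (snd p) else 0"
  have "fmul \<Sigma> f g w = (\<Sum>p\<in>?P. f (fst p) * g (snd p))" unfolding fmul_def by simp
  also have "\<dots> = (\<Sum>p\<in>?P. ?G p)" by (intro sum.cong) (auto simp: ccS_def)
  also have "\<dots> = (\<Sum>p\<in>X \<times> Y. ?G p)"
  proof (rule sum.mono_neutral_left)
    show "finite (X \<times> Y)" using X Y by simp
    show "?P \<subseteq> X \<times> Y" using sf sg by auto
    show "\<forall>p\<in>X \<times> Y - ?P. ?G p = 0" by (auto simp: supp_def ccS_def)
  qed
  also have "\<dots> = (\<Sum>x\<in>X. \<Sum>y\<in>Y. ?G (x, y))"
    unfolding sum.cartesian_product by (rule sum.cong) auto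
  finally show ?thesis by (simp only: fst_conv snd_conv)
qed

lemma supp_mono: "supp (mono x) = {x}"
  unfolding supp_def mono_def by auto

lemma supp_zero: "supp (\<lambda>_. 0) = {}"
  unfolding supp_def by auto

lemma fmul_mono_mono:
  "fmul \<Sigma> (mono x) (mono y) = (if ccS \<Sigma> x y then mono (x + y) else (\<lambda>_. 0))"
proof
  fix w
  have "fmul \<Sigma> (mono x) (mono y) w = (\<Sum>a\<in>{x}. \<Sum>b\<in>{y}. if a + b = w \<and> ccS \<Sigma> a b then mono x a * mono y b else 0)"
    by (rule fmul_expand) (auto simp: supp_mono)
  then show "fmul \<Sigma> (mono x) (mono y) w = (if ccS \<Sigma> x y then mono (x + y) else (\<lambda>_. 0)) w"
    by (auto simp: mono_def)
qed

lemma fmul_zero_right: "fmul \<Sigma> f (\<lambda>_. 0) = (\<lambda>_. 0)"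
  unfolding fmul_def supp_def by auto

lemma fmul_zero_left: "fmul \<Sigma> (\<lambda>_. 0) f = (\<lambda>_. 0)"
  unfolding fmul_def supp_def by auto

lemma cspan_zero: "(\<lambda>_. 0) \<in> cspan X"
  unfolding cspan_def by (intro CollectI exI[of _ "{}"]) auto

lemma cspan_base: "x \<in> X \<Longrightarrow> x \<in> cspan X"
  unfolding cspan_def by (intro CollectI exI[of _ "{x}"] exI[of _ "\<lambda>_. 1"]) auto

lemma cspanE:
  assumes "f \<in> cspan X"
  obtains F c where "finite F" "F \<subseteq> X" "f = (\<lambda>u. \<Sum>s\<in>F. c s * s u)"
  using assms unfolding cspan_def by blast

lemma cspanI: "finite F \<Longrightarrow> F \<subseteq> X \<Longrightarrow> f = (\<lambda>u. \<Sum>s\<in>F. c s * s u) \<Longrightarrow> f \<in> cspan X"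
  unfolding cspan_def by blast

lemma cspan_add:
  assumes f: "f \<in> cspan X" and g: "g \<in> cspan X"
  shows "(\<lambda>u. f u + g u) \<in> cspan X"
proof -
  obtain F1 c1 where 1: "finite F1" "F1 \<subseteq> X" "f = (\<lambda>u. \<Sum>s\<in>F1. c1 s * s u)" using f by (rule cspanE)
  obtain F2 c2 where 2: "finite F2" "F2 \<subseteq> X" "g = (\<lambda>u. \<Sum>s\<in>F2. c2 s * s u)" using g by (rule cspanE)
  let ?c = "\<lambda>s. (if s \<in> F1 then c1 s else 0) + (if s \<in> F2 then c2 s else 0)"
  show ?thesis
  proof (rule cspanI[of "F1 \<union> F2" _ _ ?c])
    show "finite (F1 \<union> F2)" using 1 2 by simp
    show "F1 \<union> F2 \<subseteq> X" using 1 2 by simp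
    show "(\<lambda>u. f u + g u) = (\<lambda>u. \<Sum>s\<in>F1 \<union> F2. ?c s * s u)"
    proof
      fix u
      have a: "(\<Sum>s\<in>F1 \<union> F2. (if s \<in> F1 then c1 s else 0) * s u) = (\<Sum>s\<in>F1. c1 s * s u)"
        using 1 2 by (intro sum.mono_neutral_cong_right) auto
      have b: "(\<Sum>s\<in>F1 \<union> F2. (if s \<in> F2 then c2 s else 0) * s u) = (\<Sum>s\<in>F2. c2 s * s u)"
        using 1 2 by (intro sum.mono_neutral_cong_right) auto
      show "f u + g u = (\<Sum>s\<in>F1 \<union> F2. ?c s * s u)"
        unfolding distrib_right sum.distrib a b using 1 2 by simp
    qed
  qed
qed

lemma cspan_smult:
  assumes f: "f \<in> cspan X"
  shows "(\<lambda>u. a * f u) \<in> cspan X"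
proof -
  obtain F c where 1: "finite F" "F \<subseteq> X" "f = (\<lambda>u. \<Sum>s\<in>F. c s * s u)" using f by (rule cspanE)
  show ?thesis
    by (rule cspanI[of F _ _ "\<lambda>s. a * c s"]) (use 1 in \<open>auto simp: sum_distrib_left mult.assoc\<close>)
qed

lemma cspan_sum:
  assumes "finite I" "\<And>i. i \<in> I \<Longrightarrow> f i \<in> cspan X"
  shows "(\<lambda>u. \<Sum>i\<in>I. c i * f i u) \<in> cspan X"
  using assms
proof (induction I rule: finite_induct)
  case empty
  then show ?case using cspan_zero by simp
next
  case (insert i I)
  have "(\<lambda>u. c i * f i u + (\<Sum>i\<in>I. c i * f i u)) \<in> cspan X"
    using cspan_add[OF cspan_smult[of "f i" X "c i"] insert.IH] insert.prems by auto
  then show ?case using insert.hyps by simp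
qed

lemma cspan_diff:
  assumes "f \<in> cspan X" "g \<in> cspan X"
  shows "(\<lambda>u. f u - g u) \<in> cspan X"
  using cspan_add[OF assms(1) cspan_smult[OF assms(2), of "-1"]] by simp

lemma cspan_mono: "X \<subseteq> Y \<Longrightarrow> cspan X \<subseteq> cspan Y"
  unfolding cspan_def by blast

lemma cspan_cspan: "f \<in> cspan (cspan X) \<Longrightarrow> f \<in> cspan X"
  by (erule cspanE) (auto intro!: cspan_sum)

lemma supp_cspan:
  assumes "finite F" "\<And>s. s \<in> F \<Longrightarrow> finite (supp s)"
  shows "supp (\<lambda>u. \<Sum>s\<in>F. c s * s u) \<subseteq> (\<Union>s\<in>F. supp s)"
  unfolding supp_def by (auto intro: ccontr[of "_ = 0"] sum.neutral)

lemma swap3: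
  "(\<Sum>y\<in>Y. \<Sum>s\<in>S. \<Sum>t\<in>U. G y s t) = (\<Sum>s\<in>S. \<Sum>t\<in>U. \<Sum>y\<in>Y. G y s t)"
proof -
  have "(\<Sum>y\<in>Y. \<Sum>s\<in>S. \<Sum>t\<in>U. G y s t) = (\<Sum>s\<in>S. \<Sum>y\<in>Y. \<Sum>t\<in>U. G y s t)"
    by (rule sum.swap)
  also have "\<dots> = (\<Sum>s\<in>S. \<Sum>t\<in>U. \<Sum>y\<in>Y. G y s t)"
    by (intro sum.cong refl) (rule sum.swap)
  finally show ?thesis .
qed

lemma swap4:
  "(\<Sum>x\<in>X. \<Sum>y\<in>Y. \<Sum>s\<in>S. \<Sum>t\<in>U. G x y s t) = (\<Sum>s\<in>S. \<Sum>t\<in>U. \<Sum>x\<in>X. \<Sum>y\<in>Y. G x y s t)"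
proof -
  have "(\<Sum>x\<in>X. \<Sum>y\<in>Y. \<Sum>s\<in>S. \<Sum>t\<in>U. G x y s t) = (\<Sum>x\<in>X. \<Sum>s\<in>S. \<Sum>t\<in>U. \<Sum>y\<in>Y. G x y s t)"
    by (intro sum.cong refl) (rule swap3)
  also have "\<dots> = (\<Sum>s\<in>S. \<Sum>t\<in>U. \<Sum>x\<in>X. \<Sum>y\<in>Y. G x y s t)"
    by (rule swap3)
  finally show ?thesis .
qed

lemma fmul_bilin:
  assumes F1: "finite F1" and F2: "finite F2"
    and s1: "\<And>s. s \<in> F1 \<Longrightarrow> finite (supp s)" and s2: "\<And>s. s \<in> F2 \<Longrightarrow> finite (supp s)"
  shows "fmul \<Sigma> (\<lambda>u. \<Sum>s\<in>F1. c1 s * s u) (\<lambda>u. \<Sum>t\<in>F2. c2 t * t u)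
         = (\<lambda>w. \<Sum>s\<in>F1. c1 s * (\<Sum>t\<in>F2. c2 t * fmul \<Sigma> s t w))"
proof
  fix w
  let ?X = "\<Union>s\<in>F1. supp s" and ?Y = "\<Union>s\<in>F2. supp s"
  have X: "finite ?X" using F1 s1 by auto
  have Y: "finite ?Y" using F2 s2 by auto
  let ?C = "\<lambda>x y. x + y = w \<and> ccS \<Sigma> x y"
  have "fmul \<Sigma> (\<lambda>u. \<Sum>s\<in>F1. c1 s * s u) (\<lambda>u. \<Sum>t\<in>F2. c2 t * t u) w
      = (\<Sum>x\<in>?X. \<Sum>y\<in>?Y. if ?C x y then (\<Sum>s\<in>F1. c1 s * s x) * (\<Sum>t\<in>F2. c2 t * t y) else 0)"
    by (rule fmul_expand[OF X Y supp_cspan[OF F1 s1] supp_cspan[OF F2 s2]])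
  also have "\<dots> = (\<Sum>x\<in>?X. \<Sum>y\<in>?Y. \<Sum>s\<in>F1. c1 s * (\<Sum>t\<in>F2. c2 t * (if ?C x y then s x * t y else 0)))"
  proof (intro sum.cong refl)
    fix x y
    show "(if ?C x y then (\<Sum>s\<in>F1. c1 s * s x) * (\<Sum>t\<in>F2. c2 t * t y) else 0) =
          (\<Sum>s\<in>F1. c1 s * (\<Sum>t\<in>F2. c2 t * (if ?C x y then s x * t y else 0)))"
    proof (cases "?C x y")
      case True
      have "(\<Sum>s\<in>F1. c1 s * s x) * (\<Sum>t\<in>F2. c2 t * t y) = (\<Sum>s\<in>F1. c1 s * s x * (\<Sum>t\<in>F2. c2 t * t y))"
        by (rule sum_distrib_right)
      also have "\<dots> = (\<Sum>s\<in>F1. c1 s * (\<Sum>t\<in>F2. c2 t * (s x * t y)))"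
        by (intro sum.cong refl) (simp add: sum_distrib_left mult_ac)
      finally show ?thesis using True by simp
    next
      case False
      show ?thesis by (simp only: if_not_P[OF False]) simp
    qed
  qed
  also have "\<dots> = (\<Sum>s\<in>F1. c1 s * (\<Sum>t\<in>F2. c2 t * (\<Sum>x\<in>?X. \<Sum>y\<in>?Y. (if ?C x y then s x * t y else 0))))"
  proof -
    have "(\<Sum>x\<in>?X. \<Sum>y\<in>?Y. \<Sum>s\<in>F1. c1 s * (\<Sum>t\<in>F2. c2 t * (if ?C x y then s x * t y else 0)))
        = (\<Sum>x\<in>?X. \<Sum>y\<in>?Y. \<Sum>s\<in>F1. \<Sum>t\<in>F2. c1 s * (c2 t * (if ?C x y then s x * t y else 0)))"
      by (simp only: sum_distrib_left)
    also have "\<dots> = (\<Sum>s\<in>F1. \<Sum>t\<in>F2. \<Sum>x\<in>?X. \<Sum>y\<in>?Y. c1 s * (c2 t * (if ?C x y then s x * t y else 0)))"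
      by (rule swap4)
    also have "\<dots> = (\<Sum>s\<in>F1. c1 s * (\<Sum>t\<in>F2. c2 t * (\<Sum>x\<in>?X. \<Sum>y\<in>?Y. (if ?C x y then s x * t y else 0))))"
      by (simp only: sum_distrib_left)
    finally show ?thesis .
  qed
  also have "\<dots> = (\<Sum>s\<in>F1. c1 s * (\<Sum>t\<in>F2. c2 t * fmul \<Sigma> s t w))"
  proof (intro sum.cong refl arg_cong2[where f="(*)"])
    fix s t assume "s \<in> F1" "t \<in> F2"
    then show "(\<Sum>x\<in>?X. \<Sum>y\<in>?Y. (if ?C x y then s x * t y else 0)) = fmul \<Sigma> s t w"
      by (intro fmul_expand[symmetric] X Y) auto
  qed
  finally show "fmul \<Sigma> (\<lambda>u. \<Sum>s\<in>F1. c1 s * s u) (\<lambda>u. \<Sum>t\<in>F2. c2 t * t u) w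
      = (\<Sum>s\<in>F1. c1 s * (\<Sum>t\<in>F2. c2 t * fmul \<Sigma> s t w))" .
qed

lemma cspan_fmul:
  assumes f: "f \<in> cspan M1" and g: "g \<in> cspan M2"
    and fs1: "\<And>s. s \<in> M1 \<Longrightarrow> finite (supp s)" and fs2: "\<And>s. s \<in> M2 \<Longrightarrow> finite (supp s)"
    and prod: "\<And>s t. s \<in> M1 \<Longrightarrow> t \<in> M2 \<Longrightarrow> fmul \<Sigma> s t \<in> cspan M3"
  shows "fmul \<Sigma> f g \<in> cspan M3"
proof -
  obtain F1 c1 where 1: "finite F1" "F1 \<subseteq> M1" "f = (\<lambda>u. \<Sum>s\<in>F1. c1 s * s u)" using f by (rule cspanE)
  obtain F2 c2 where 2: "finite F2" "F2 \<subseteq> M2" "g = (\<lambda>u. \<Sum>s\<in>F2. c2 s * s u)" using g by (rule cspanE)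
  have "fmul \<Sigma> f g = (\<lambda>w. \<Sum>s\<in>F1. c1 s * (\<Sum>t\<in>F2. c2 t * fmul \<Sigma> s t w))"
    unfolding 1(3) 2(3) using 1 2 fs1 fs2 by (intro fmul_bilin) auto
  also have "\<dots> \<in> cspan M3"
    using 1 2 prod by (intro cspan_sum) auto
  finally show ?thesis .
qed

definition RRs :: "(real^'d) set \<Rightarrow> (real^'d) set set \<Rightarrow> real^'d \<Rightarrow> bool" where
  "RRs A T x \<longleftrightarrow> (\<exists>(\<nu>::real^'d \<Rightarrow> nat). \<exists>S\<in>T. (\<forall>b. \<nu> b \<noteq> 0 \<longrightarrow> b \<in> S) \<and> x = (\<Sum>b\<in>A. real (\<nu> b) *\<^sub>R b))"

definition Good :: "(real^'d) set \<Rightarrow> (real^'d) set set \<Rightarrow> real^'d \<Rightarrow> real^'d \<Rightarrow> bool" where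
  "Good A T \<beta> w \<longleftrightarrow> (\<exists>g (\<nu>::real^'d \<Rightarrow> nat) S. mono g \<in> Mgens A T \<beta> \<and> S \<in> T \<and> g \<in> conic S \<and>
     (\<forall>b. \<nu> b \<noteq> 0 \<longrightarrow> b \<in> S) \<and> w = g + (\<Sum>b\<in>A. real (\<nu> b) *\<^sub>R b))"

locale trig2 = trig A T h for A :: "(real^'d) set" and T h +
  fixes \<beta> :: "real^'d"
  assumes Tne: "T \<noteq> {}"
begin

definition "Rays = {a\<in>A. ray a \<in> fan T}"

lemma Rays_eq: "Rays = \<Union>T"
  unfolding Rays_def using ray_in_T T_sub T_ray by blast

lemma finRays: "finite Rays"
  unfolding Rays_def using finA by simp

lemma ccS_eq: "ccS (fan T) x y \<longleftrightarrow> ccT T x y"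
  unfolding ccS_def using cc_fan by blast

lemma sumA_eq:
  assumes S: "S \<in> T" and nu: "\<forall>b. \<nu> b \<noteq> 0 \<longrightarrow> b \<in> S"
  shows "(\<Sum>b\<in>A. real (\<nu> b) *\<^sub>R b) = (\<Sum>b\<in>S. real (\<nu> b) *\<^sub>R b)"
  using T_sub[OF S] nu finA by (intro sum.mono_neutral_right) auto

lemma sumA_conic:
  assumes S: "S \<in> T" and nu: "\<forall>b. \<nu> b \<noteq> 0 \<longrightarrow> b \<in> S"
  shows "(\<Sum>b\<in>A. real (\<nu> b) *\<^sub>R b) \<in> conic S"
  unfolding sumA_eq[OF S nu] by (rule conicI) simp

lemma supp_into:
  assumes S: "S \<in> T" and S2: "S2 \<in> T" and nu: "\<forall>b. \<nu> b \<noteq> 0 \<longrightarrow> b \<in> S"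
    and c: "(\<Sum>b\<in>A. real (\<nu> b) *\<^sub>R b) \<in> conic S2"
  shows "\<forall>b. \<nu> b \<noteq> 0 \<longrightarrow> b \<in> S2"
proof -
  let ?F = "{b\<in>S. \<nu> b \<noteq> 0}"
  have fS: "finite S" using T_fin S .
  have "(\<Sum>b\<in>A. real (\<nu> b) *\<^sub>R b) = (\<Sum>b\<in>?F. real (\<nu> b) *\<^sub>R b)"
    unfolding sumA_eq[OF S nu] using fS by (intro sum.mono_neutral_right) auto
  then have "?F \<subseteq> S2" using core[OF S S2, of ?F "\<lambda>b. real (\<nu> b)"] c by auto
  then show ?thesis using nu by blast
qed

lemma RR_add:
  assumes x: "RRs A T x" and y: "RRs A T y" and cc: "ccT T x y"
  shows "RRs A T (x + y)"
proof -
  obtain \<nu>1 S1 where 1: "S1 \<in> T" "\<forall>b. \<nu>1 b \<noteq> 0 \<longrightarrow> b \<in> S1" "x = (\<Sum>b\<in>A. real (\<nu>1 b) *\<^sub>R b)"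
    using x unfolding RRs_def by blast
  obtain \<nu>2 S2 where 2: "S2 \<in> T" "\<forall>b. \<nu>2 b \<noteq> 0 \<longrightarrow> b \<in> S2" "y = (\<Sum>b\<in>A. real (\<nu>2 b) *\<^sub>R b)"
    using y unfolding RRs_def by blast
  obtain S3 where 3: "S3 \<in> T" "x \<in> conic S3" "y \<in> conic S3" using cc unfolding ccT_def by blast
  have a: "\<forall>b. \<nu>1 b \<noteq> 0 \<longrightarrow> b \<in> S3" using supp_into[OF 1(1) 3(1) 1(2)] 1(3) 3(2) by simp
  have b: "\<forall>b. \<nu>2 b \<noteq> 0 \<longrightarrow> b \<in> S3" using supp_into[OF 2(1) 3(1) 2(2)] 2(3) 3(3) by simp
  have "x + y = (\<Sum>b\<in>A. real (\<nu>1 b + \<nu>2 b) *\<^sub>R b)"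
    unfolding 1(3) 2(3) by (simp add: sum.distrib scaleR_add_left)
  then show ?thesis unfolding RRs_def using a b 3(1)
    by (intro exI[of _ "\<lambda>b. \<nu>1 b + \<nu>2 b"] bexI[of _ S3]) auto
qed

lemma RR_ray:
  assumes b: "b \<in> Rays" shows "RRs A T b"
proof -
  obtain S where S: "S \<in> T" "b \<in> S" using b Rays_eq by blast
  have bA: "b \<in> A" using b unfolding Rays_def by simp
  have "(\<Sum>x\<in>A. real (if x = b then 1 else 0) *\<^sub>R x) = (\<Sum>x\<in>A. if x = b then x else 0)"
    by (intro sum.cong) auto
  also have "\<dots> = b" using bA finA by simp
  finally show ?thesis unfolding RRs_def using S
    by (intro exI[of _ "\<lambda>x. if x = b then 1 else 0"] bexI[of _ S]) auto
qed

lemma RR_0: "RRs A T 0"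
proof -
  obtain S where "S \<in> T" using Tne by blast
  then show ?thesis unfolding RRs_def by (intro exI[of _ "\<lambda>_. 0"] bexI[of _ S]) auto
qed

lemma Good_add:
  assumes x: "RRs A T x" and w: "Good A T \<beta> w" and cc: "ccT T x w"
  shows "Good A T \<beta> (x + w)"
proof -
  obtain \<nu>1 S1 where 1: "S1 \<in> T" "\<forall>b. \<nu>1 b \<noteq> 0 \<longrightarrow> b \<in> S1" "x = (\<Sum>b\<in>A. real (\<nu>1 b) *\<^sub>R b)"
    using x unfolding RRs_def by blast
  obtain g \<nu> S where 2: "mono g \<in> Mgens A T \<beta>" "S \<in> T" "g \<in> conic S" "\<forall>b. \<nu> b \<noteq> 0 \<longrightarrow> b \<in> S"
     "w = g + (\<Sum>b\<in>A. real (\<nu> b) *\<^sub>R b)"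
    using w unfolding Good_def by blast
  obtain S3 where 3: "S3 \<in> T" "x \<in> conic S3" "w \<in> conic S3" using cc unfolding ccT_def by blast
  have yS: "(\<Sum>b\<in>A. real (\<nu> b) *\<^sub>R b) \<in> conic S" using sumA_conic[OF 2(2) 2(4)] .
  have g3: "g \<in> conic S3" using Gsplit[OF 2(2) 3(1) 2(3) yS] 3(3) 2(5) by simp
  have y3: "(\<Sum>b\<in>A. real (\<nu> b) *\<^sub>R b) \<in> conic S3"
    using Gsplit[OF 2(2) 3(1) yS 2(3)] 3(3) 2(5) by (simp add: add.commute)
  have a: "\<forall>b. \<nu>1 b \<noteq> 0 \<longrightarrow> b \<in> S3" using supp_into[OF 1(1) 3(1) 1(2)] 1(3) 3(2) by simp
  have b: "\<forall>b. \<nu> b \<noteq> 0 \<longrightarrow> b \<in> S3" using supp_into[OF 2(2) 3(1) 2(4) y3] .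
  have "x + w = g + (\<Sum>b\<in>A. real (\<nu>1 b + \<nu> b) *\<^sub>R b)"
    unfolding 1(3) 2(5) by (simp add: sum.distrib scaleR_add_left algebra_simps)
  then show ?thesis unfolding Good_def using a b 3(1) 2(1) g3
    by (intro exI[of _ g] exI[of _ "\<lambda>b. \<nu>1 b + \<nu> b"] exI[of _ S3]) auto
qed

lemma fmul_monos:
  "fmul (fan T) (mono x) (mono y) = (if ccT T x y then mono (x + y) else (\<lambda>_. 0))"
  using fmul_mono_mono[of "fan T" x y] ccS_eq by simp

lemma Rring_span: "r \<in> Rring A (fan T) \<Longrightarrow> r \<in> cspan (mono ` {x. RRs A T x})"
proof (induction rule: Rring.induct)
  case one
  then show ?case using RR_0 by (intro cspan_base) auto
next
  case (gen a)
  then have "a \<in> Rays" unfolding Rays_def by simp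
  then show ?case using RR_ray by (intro cspan_base) auto
next
  case (add f g)
  then show ?case using cspan_add by blast
next
  case (smult f c)
  then show ?case using cspan_smult by blast
next
  case (mult f g)
  show ?case
  proof (rule cspan_fmul[OF mult.IH])
    fix s t assume s: "s \<in> mono ` {x. RRs A T x}" and t: "t \<in> mono ` {x. RRs A T x}"
    then obtain x y where "s = mono x" "t = mono y" "RRs A T x" "RRs A T y" by blast
    then show "fmul (fan T) s t \<in> cspan (mono ` {x. RRs A T x})"
      using RR_add by (auto simp: fmul_monos cspan_zero intro!: cspan_base)
  qed (auto simp: supp_mono)
qed

lemma lprod_cases:
  "lprod (fan T) (map mono xs) = (\<lambda>_. 0) \<or> (\<exists>y S. S \<in> T \<and> y \<in> conic S \<and> lprod (fan T) (map mono xs) = mono y)"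
proof (induction xs)
  case Nil
  obtain S where "S \<in> T" using Tne by blast
  then show ?case using conic_0 by auto
next
  case (Cons x xs)
  show ?case
  proof (cases "lprod (fan T) (map mono xs) = (\<lambda>_. 0)")
    case True
    then show ?thesis by (simp add: fmul_zero_right)
  next
    case False
    then obtain y S where y: "lprod (fan T) (map mono xs) = mono y" using Cons.IH by blast
    show ?thesis
    proof (cases "ccT T x y")
      case True
      then obtain S3 where "S3 \<in> T" "x \<in> conic S3" "y \<in> conic S3" unfolding ccT_def by blast
      then show ?thesis using True y by (auto simp: fmul_monos intro: conic_add)
    next
      case False
      then show ?thesis using y by (simp add: fmul_monos)
    qed
  qed
qed

lemma Mgens_cases:
  assumes "m \<in> Mgens A T \<beta>"
  shows "m = (\<lambda>_. 0) \<or> (\<exists>g S. m = mono g \<and> S \<in> T \<and> g \<in> conic S)"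
proof -
  obtain v xs where m: "m = fmul (fan T) (mono v) (lprod (fan T) (map mono xs))"
    using assms unfolding Mgens_def by blast
  show ?thesis
  proof (cases "lprod (fan T) (map mono xs) = (\<lambda>_. 0)")
    case True
    then show ?thesis using m by (simp add: fmul_zero_right)
  next
    case False
    then obtain y where y: "lprod (fan T) (map mono xs) = mono y" using lprod_cases by blast
    show ?thesis
    proof (cases "ccT T v y")
      case True
      then obtain S3 where "S3 \<in> T" "v \<in> conic S3" "y \<in> conic S3" unfolding ccT_def by blast
      then show ?thesis using True y m by (auto simp: fmul_monos intro: conic_add)
    next
      case False
      then show ?thesis using y m by (simp add: fmul_monos)
    qed
  qed
qed

lemma Mbeta_span: "m \<in> Mbeta A T \<beta> \<Longrightarrow> m \<in> cspan (mono ` {w. Good A T \<beta> w})"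
proof (induction rule: Mbeta.induct)
  case (gen g)
  show ?case
  proof (cases "g = (\<lambda>_. 0)")
    case True
    then show ?thesis using cspan_zero by simp
  next
    case False
    then obtain g' S where "g = mono g'" "S \<in> T" "g' \<in> conic S" using Mgens_cases[OF gen] by blast
    then have "Good A T \<beta> g'" unfolding Good_def using gen
      by (intro exI[of _ g'] exI[of _ "\<lambda>_. 0"] exI[of _ S]) auto
    then show ?thesis using \<open>g = mono g'\<close> by (intro cspan_base) auto
  qed
next
  case zero
  then show ?case by (rule cspan_zero)
next
  case (add f g)
  then show ?case using cspan_add by blast
next
  case (rmult r f)
  show ?case
  proof (rule cspan_fmul[OF Rring_span[OF rmult.hyps(1)] rmult.IH])
    fix s t assume s: "s \<in> mono ` {x. RRs A T x}" and t: "t \<in> mono ` {x. Good A T \<beta> x}"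
    then obtain x y where "s = mono x" "t = mono y" "RRs A T x" "Good A T \<beta> y" by blast
    then show "fmul (fan T) s t \<in> cspan (mono ` {x. Good A T \<beta> x})"
      using Good_add by (auto simp: fmul_monos cspan_zero intro!: cspan_base)
  qed (auto simp: supp_mono)
qed

end

context trig2 begin

lemma Zgen_val: "Zgen A (fan T) i b = (if b \<in> Rays then complex_of_real (b $ i) else 0)"
proof -
  have "Zgen A (fan T) i b = (\<Sum>a\<in>Rays. complex_of_real (a $ i) * mono a b)"
    unfolding Zgen_def Rays_def by simp
  also have "\<dots> = (\<Sum>a\<in>Rays. if b = a then complex_of_real (a $ i) else 0)"
    by (intro sum.cong) (auto simp: mono_def)
  also have "\<dots> = (if b \<in> Rays then complex_of_real (b $ i) else 0)"
    using finRays by (simp add: sum.delta)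
  finally show ?thesis .
qed

lemma supp_Zgen: "supp (Zgen A (fan T) i) \<subseteq> Rays"
  unfolding supp_def using Zgen_val by auto

lemma fmul_Z:
  "fmul (fan T) (Zgen A (fan T) i) (mono p) w
     = (\<Sum>b\<in>Rays. if b + p = w \<and> ccT T b p then complex_of_real (b $ i) else 0)"
proof -
  have "fmul (fan T) (Zgen A (fan T) i) (mono p) w
     = (\<Sum>b\<in>Rays. \<Sum>y\<in>{p}. if b + y = w \<and> ccS (fan T) b y then Zgen A (fan T) i b * mono p y else 0)"
    by (rule fmul_expand[OF finRays _ supp_Zgen]) (auto simp: supp_mono)
  also have "\<dots> = (\<Sum>b\<in>Rays. if b + p = w \<and> ccT T b p then complex_of_real (b $ i) else 0)"
    by (intro sum.cong refl) (auto simp: ccS_eq Zgen_val mono_def)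
  finally show ?thesis .
qed

lemma relation:
  assumes p: "mono p \<in> Mbeta A T \<beta>"
  shows "(\<lambda>w. \<Sum>b\<in>Rays. if b + p = w \<and> ccT T b p then complex_of_real (\<Sum>i\<in>UNIV. l i * b $ i) else 0) \<in> ZM A T \<beta>"
proof -
  have base: "\<And>i. fmul (fan T) (Zgen A (fan T) i) (mono p) \<in> ZM A T \<beta>"
    unfolding ZM_def using p by (intro cspan_base) blast
  have "(\<lambda>w. \<Sum>i\<in>UNIV. complex_of_real (l i) * fmul (fan T) (Zgen A (fan T) i) (mono p) w) \<in> ZM A T \<beta>"
    unfolding ZM_def by (rule cspan_sum) (use base in \<open>auto simp: ZM_def\<close>)
  also have "(\<lambda>w. \<Sum>i\<in>UNIV. complex_of_real (l i) * fmul (fan T) (Zgen A (fan T) i) (mono p) w)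
     = (\<lambda>w. \<Sum>b\<in>Rays. if b + p = w \<and> ccT T b p then complex_of_real (\<Sum>i\<in>UNIV. l i * b $ i) else 0)"
  proof
    fix w
    have "(\<Sum>i\<in>UNIV. complex_of_real (l i) * fmul (fan T) (Zgen A (fan T) i) (mono p) w)
        = (\<Sum>i\<in>UNIV. \<Sum>b\<in>Rays. complex_of_real (l i) * (if b + p = w \<and> ccT T b p then complex_of_real (b $ i) else 0))"
      by (simp add: fmul_Z sum_distrib_left)
    also have "\<dots> = (\<Sum>b\<in>Rays. \<Sum>i\<in>UNIV. complex_of_real (l i) * (if b + p = w \<and> ccT T b p then complex_of_real (b $ i) else 0))"
      by (rule sum.swap)
    also have "\<dots> = (\<Sum>b\<in>Rays. if b + p = w \<and> ccT T b p then complex_of_real (\<Sum>i\<in>UNIV. l i * b $ i) else 0)"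
      by (intro sum.cong refl) auto
    finally show "(\<Sum>i\<in>UNIV. complex_of_real (l i) * fmul (fan T) (Zgen A (fan T) i) (mono p) w)
        = (\<Sum>b\<in>Rays. if b + p = w \<and> ccT T b p then complex_of_real (\<Sum>i\<in>UNIV. l i * b $ i) else 0)" .
  qed
  finally show ?thesis .
qed

lemma addray:
  assumes x: "mono x \<in> Mbeta A T \<beta>" and b: "b \<in> Rays" and cc: "ccT T b x"
  shows "mono (b + x) \<in> Mbeta A T \<beta>"
proof -
  have "mono b \<in> Rring A (fan T)" using b unfolding Rays_def by (intro Rring.gen) auto
  then have "fmul (fan T) (mono b) (mono x) \<in> Mbeta A T \<beta>" using x by (rule Mbeta.rmult)
  then show ?thesis using cc by (simp add: fmul_monos)
qed

lemma addray_n: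
  assumes x: "mono x \<in> Mbeta A T \<beta>" and xS: "x \<in> conic S" and S: "S \<in> T" and b: "b \<in> S"
  shows "mono (x + real k *\<^sub>R b) \<in> Mbeta A T \<beta> \<and> x + real k *\<^sub>R b \<in> conic S"
proof (induction k)
  case 0
  then show ?case using x xS by simp
next
  case (Suc k)
  have bc: "b \<in> conic S" using conic_elem[OF T_fin[OF S] b] .
  have bR: "b \<in> Rays" using b S Rays_eq by blast
  have cc: "ccT T b (x + real k *\<^sub>R b)" unfolding ccT_def using Suc.IH bc S by blast
  have "mono (b + (x + real k *\<^sub>R b)) \<in> Mbeta A T \<beta>" using addray[OF _ bR cc] Suc.IH by blast
  moreover have "b + (x + real k *\<^sub>R b) = x + real (Suc k) *\<^sub>R b" by (simp add: algebra_simps)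
  moreover have "b + (x + real k *\<^sub>R b) \<in> conic S" using conic_add[OF bc] Suc.IH by blast
  ultimately show ?case by metis
qed

lemma addrays:
  assumes g: "mono g \<in> Mbeta A T \<beta>" and gS: "g \<in> conic S" and S: "S \<in> T"
    and nu: "\<forall>b. \<nu> b \<noteq> 0 \<longrightarrow> b \<in> S"
  shows "mono (g + (\<Sum>b\<in>A. real (\<nu> b) *\<^sub>R b)) \<in> Mbeta A T \<beta>"
proof -
  have "\<And>B. B \<subseteq> A \<Longrightarrow> mono (g + (\<Sum>b\<in>B. real (\<nu> b) *\<^sub>R b)) \<in> Mbeta A T \<beta> \<and> g + (\<Sum>b\<in>B. real (\<nu> b) *\<^sub>R b) \<in> conic S"
  proof -
    fix B assume "B \<subseteq> A"
    then have "finite B" using finA finite_subset by blast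
    then show "?thesis B" using \<open>B \<subseteq> A\<close>
    proof (induction B rule: finite_induct)
      case empty
      then show ?case using g gS by simp
    next
      case (insert b B)
      have IH: "mono (g + (\<Sum>b\<in>B. real (\<nu> b) *\<^sub>R b)) \<in> Mbeta A T \<beta> \<and> g + (\<Sum>b\<in>B. real (\<nu> b) *\<^sub>R b) \<in> conic S"
        using insert by simp
      have eq: "g + (\<Sum>b\<in>insert b B. real (\<nu> b) *\<^sub>R b) = (g + (\<Sum>b\<in>B. real (\<nu> b) *\<^sub>R b)) + real (\<nu> b) *\<^sub>R b"
        using insert.hyps by (simp add: algebra_simps)
      show ?case
      proof (cases "\<nu> b = 0")
        case True
        then show ?thesis using eq IH by simp
      next
        case False
        then have "b \<in> S" using nu by blast
        then show ?thesis unfolding eq using addray_n[OF _ _ S, of _ b "\<nu> b"] IH by blast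
      qed
    qed
  qed
  then show ?thesis by blast
qed

lemma Good_Mbeta:
  assumes "Good A T \<beta> w" shows "mono w \<in> Mbeta A T \<beta>"
proof -
  obtain g \<nu> S where 2: "mono g \<in> Mgens A T \<beta>" "S \<in> T" "g \<in> conic S" "\<forall>b. \<nu> b \<noteq> 0 \<longrightarrow> b \<in> S"
     "w = g + (\<Sum>b\<in>A. real (\<nu> b) *\<^sub>R b)"
    using assms unfolding Good_def by blast
  show ?thesis unfolding 2(5) by (rule addrays[OF Mbeta.gen[OF 2(1)] 2(3) 2(2) 2(4)])
qed

end

context trig2 begin

definition "MIP k \<longleftrightarrow> (\<forall>S F c u m a. S \<in> T \<longrightarrow> F \<subseteq> S \<longrightarrow> a \<in> F \<longrightarrow> (\<forall>s\<in>F. 0 < c s) \<longrightarrow>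
   u + real m *\<^sub>R a = (\<Sum>s\<in>F. c s *\<^sub>R s) \<longrightarrow> mono u \<in> Mbeta A T \<beta> \<longrightarrow> ccT T u a \<longrightarrow>
   k + 1 \<le> m \<longrightarrow> real k + 2 \<le> c a \<longrightarrow> card A \<le> card F + k \<longrightarrow>
   mono (u + real m *\<^sub>R a) \<in> ZM A T \<beta>)"

lemma MI_step:
  assumes IH: "\<And>k'. k' < k \<Longrightarrow> MIP k'"
  shows "MIP k"
  unfolding MIP_def
proof (intro allI impI)
  fix S F c u m a
  assume S: "S \<in> T" and FS: "F \<subseteq> S" and aF: "a \<in> F" and cpos: "\<forall>s\<in>F. 0 < c s"
    and eq: "u + real m *\<^sub>R a = (\<Sum>s\<in>F. c s *\<^sub>R s)" and uM: "mono u \<in> Mbeta A T \<beta>"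
    and ua: "ccT T u a" and km: "k + 1 \<le> m" and kc: "real k + 2 \<le> c a" and card: "card A \<le> card F + k"
  have fS: "finite S" using T_fin S .
  have fF: "finite F" using fS FS finite_subset by blast
  have aS: "a \<in> S" using aF FS by blast
  define c' where "c' = c(a := c a - 1)"
  define p' where "p' = u + real (m - 1) *\<^sub>R a"
  have c'pos: "\<forall>s\<in>F. 0 < c' s" using cpos kc unfolding c'_def by auto
  have p'eq: "p' = (\<Sum>s\<in>F. c' s *\<^sub>R s)"
  proof -
    have "(\<Sum>s\<in>F. c' s *\<^sub>R s) = c' a *\<^sub>R a + (\<Sum>s\<in>F - {a}. c' s *\<^sub>R s)"
      using sum.remove[OF fF aF] by simp
    also have "(\<Sum>s\<in>F - {a}. c' s *\<^sub>R s) = (\<Sum>s\<in>F - {a}. c s *\<^sub>R s)"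
      unfolding c'_def by (intro sum.cong) auto
    also have "(\<Sum>s\<in>F - {a}. c s *\<^sub>R s) = (\<Sum>s\<in>F. c s *\<^sub>R s) - c a *\<^sub>R a"
      using sum.remove[OF fF aF, of "\<lambda>s. c s *\<^sub>R s"] by simp
    finally have "(\<Sum>s\<in>F. c' s *\<^sub>R s) = (\<Sum>s\<in>F. c s *\<^sub>R s) - a"
      unfolding c'_def by (simp add: algebra_simps)
    also have "\<dots> = p'"
      unfolding eq[symmetric] p'_def using km by (simp add: of_nat_diff algebra_simps)
    finally show ?thesis by simp
  qed
  have p'F: "p' \<in> conic F" unfolding p'eq using c'pos by (intro conicI) (auto intro: less_imp_le)
  have p'S: "p' \<in> conic S" using conic_mono[OF fS FS] p'F by blast
  obtain S0 where S0: "S0 \<in> T" "u \<in> conic S0" "a \<in> conic S0" using ua unfolding ccT_def by blast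
  have aS0: "a \<in> S0" using vertex[OF S S0(1) aS S0(3)] .
  have p'M: "mono p' \<in> Mbeta A T \<beta>" unfolding p'_def using addray_n[OF uM S0(2) S0(1) aS0] by blast
  obtain l where l: "\<forall>b\<in>F. (\<Sum>i\<in>UNIV. l i * b $ i) = (if b = a then 1 else 0)"
    using dual[OF S FS aF] by blast
  let ?R = "\<lambda>w. \<Sum>b\<in>Rays. if b + p' = w \<and> ccT T b p' then complex_of_real (\<Sum>i\<in>UNIV. l i * b $ i) else 0"
  have RZ: "?R \<in> ZM A T \<beta>" by (rule relation[OF p'M])
  have FR: "F \<subseteq> Rays" using FS S Rays_eq by blast
  define G where "G b = (if ccT T b p' then mono (b + p') else (\<lambda>_. 0))" for b
  have GZ: "G b \<in> ZM A T \<beta>" if b: "b \<in> Rays - F" for b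
  proof (cases "ccT T b p'")
    case False
    then show ?thesis unfolding G_def ZM_def by (simp add: cspan_zero)
  next
    case True
    then obtain S2 where S2: "S2 \<in> T" "b \<in> conic S2" "p' \<in> conic S2" unfolding ccT_def by blast
    have FS2: "F \<subseteq> S2" using core[OF S S2(1) FS c'pos] S2(3) p'eq by simp
    obtain S'' where S'': "S'' \<in> T" "b \<in> S''" using b Rays_eq by blast
    have bS2: "b \<in> S2" using vertex[OF S''(1) S2(1) S''(2) S2(2)] .
    have bF: "b \<notin> F" using b by blast
    define F' where "F' = insert b F"
    have F'S2: "F' \<subseteq> S2" unfolding F'_def using FS2 bS2 by blast
    have cardF': "card F' = card F + 1" unfolding F'_def using fF bF by simp
    have "card F' \<le> card A" using F'S2 T_sub[OF S2(1)] finA card_mono by (metis order_trans)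
    then have kpos: "k \<ge> 1" using card cardF' by linarith
    define k' where "k' = k - 1"
    have k'k: "k' < k" unfolding k'_def using kpos by simp
    have m1: "real (m - 1) \<ge> 1" using km kpos by auto
    have u0: "real (m - 1) *\<^sub>R a \<in> conic S0" using conic_scale[OF S0(3)] by simp
    have uS2: "u \<in> conic S2" using Gsplit[OF S0(1) S2(1) S0(2) u0] S2(3) unfolding p'_def by simp
    have maS2: "real (m - 1) *\<^sub>R a \<in> conic S2"
      using Gsplit[OF S0(1) S2(1) u0 S0(2)] S2(3) unfolding p'_def by (simp add: add.commute)
    have "(1 / real (m - 1)) *\<^sub>R (real (m - 1) *\<^sub>R a) \<in> conic S2"
      by (rule conic_scale[OF maS2]) simp
    moreover have "\<not> m \<le> Suc 0" using km kpos by simp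
    ultimately have aS2: "a \<in> conic S2" by simp
    have u'M: "mono (u + b) \<in> Mbeta A T \<beta>"
    proof -
      have "ccT T b u" unfolding ccT_def using S2 uS2 by blast
      then show ?thesis using addray[OF uM] b by (simp add: add.commute)
    qed
    have u'a: "ccT T (u + b) a" unfolding ccT_def using S2(1) conic_add[OF uS2 S2(2)] aS2 by blast
    define c'' where "c'' = c'(b := 1)"
    have c''pos: "\<forall>s\<in>F'. 0 < c'' s" unfolding c''_def F'_def using c'pos by auto
    have eq'': "(u + b) + real (m - 1) *\<^sub>R a = (\<Sum>s\<in>F'. c'' s *\<^sub>R s)"
    proof -
      have "(\<Sum>s\<in>F'. c'' s *\<^sub>R s) = c'' b *\<^sub>R b + (\<Sum>s\<in>F. c'' s *\<^sub>R s)"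
        unfolding F'_def using fF bF by simp
      also have "(\<Sum>s\<in>F. c'' s *\<^sub>R s) = (\<Sum>s\<in>F. c' s *\<^sub>R s)"
        unfolding c''_def using bF by (intro sum.cong) auto
      finally show ?thesis unfolding c''_def using p'eq unfolding p'_def by (simp add: algebra_simps)
    qed
    have ab: "a \<noteq> b" using aF bF by blast
    have "MIP k'" using IH[OF k'k] .
    then have "mono ((u + b) + real (m - 1) *\<^sub>R a) \<in> ZM A T \<beta>"
      unfolding MIP_def
    proof (elim allE impE)
      show "S2 \<in> T" by fact
      show "F' \<subseteq> S2" by fact
      show "a \<in> F'" unfolding F'_def using aF by blast
      show "\<forall>s\<in>F'. 0 < c'' s" by fact
      show "(u + b) + real (m - 1) *\<^sub>R a = (\<Sum>s\<in>F'. c'' s *\<^sub>R s)" by fact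
      show "mono (u + b) \<in> Mbeta A T \<beta>" by fact
      show "ccT T (u + b) a" by fact
      show "k' + 1 \<le> m - 1" unfolding k'_def using km kpos by simp
      show "real k' + 2 \<le> c'' a" unfolding k'_def c''_def c'_def using kc kpos ab by (simp add: of_nat_diff)
      show "card A \<le> card F' + k'" unfolding k'_def using card cardF' kpos by simp
    qed
    moreover have "(u + b) + real (m - 1) *\<^sub>R a = b + p'" unfolding p'_def by (simp add: algebra_simps)
    ultimately have "mono (b + p') \<in> ZM A T \<beta>" by metis
    then show ?thesis unfolding G_def using True by simp
  qed
  have split: "?R w = mono (a + p') w + (\<Sum>b\<in>Rays - F. complex_of_real (\<Sum>i\<in>UNIV. l i * b $ i) * G b w)" for w
  proof -
    have "?R w = (\<Sum>b\<in>F. if b + p' = w \<and> ccT T b p' then complex_of_real (\<Sum>i\<in>UNIV. l i * b $ i) else 0)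
               + (\<Sum>b\<in>Rays - F. if b + p' = w \<and> ccT T b p' then complex_of_real (\<Sum>i\<in>UNIV. l i * b $ i) else 0)"
      using sum.subset_diff[OF FR finRays] by (simp add: add.commute)
    also have "(\<Sum>b\<in>F. if b + p' = w \<and> ccT T b p' then complex_of_real (\<Sum>i\<in>UNIV. l i * b $ i) else 0)
             = (\<Sum>b\<in>F. if b = a then mono (a + p') w else 0)"
    proof (intro sum.cong refl)
      fix b assume bF: "b \<in> F"
      show "(if b + p' = w \<and> ccT T b p' then complex_of_real (\<Sum>i\<in>UNIV. l i * b $ i) else 0)
            = (if b = a then mono (a + p') w else 0)"
      proof (cases "b = a")
        case True
        have "ccT T a p'" unfolding ccT_def using S p'S conic_elem[OF fS aS] by blast
        then show ?thesis using True l bF by (auto simp: mono_def)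
      next
        case False
        then show ?thesis using l bF by auto
      qed
    qed
    also have "\<dots> = mono (a + p') w" using fF aF by (simp add: sum.delta')
    also have "(\<Sum>b\<in>Rays - F. if b + p' = w \<and> ccT T b p' then complex_of_real (\<Sum>i\<in>UNIV. l i * b $ i) else 0)
             = (\<Sum>b\<in>Rays - F. complex_of_real (\<Sum>i\<in>UNIV. l i * b $ i) * G b w)"
      by (intro sum.cong refl) (auto simp: G_def mono_def)
    finally show ?thesis .
  qed
  have sumZ: "(\<lambda>w. \<Sum>b\<in>Rays - F. complex_of_real (\<Sum>i\<in>UNIV. l i * b $ i) * G b w) \<in> ZM A T \<beta>"
    unfolding ZM_def using finRays GZ unfolding ZM_def by (intro cspan_sum) auto
  have "(\<lambda>w. ?R w - (\<Sum>b\<in>Rays - F. complex_of_real (\<Sum>i\<in>UNIV. l i * b $ i) * G b w)) \<in> ZM A T \<beta>"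
    using cspan_diff[of ?R _ "\<lambda>w. \<Sum>b\<in>Rays - F. complex_of_real (\<Sum>i\<in>UNIV. l i * b $ i) * G b w"] RZ sumZ
    unfolding ZM_def by blast
  moreover have "(\<lambda>w. ?R w - (\<Sum>b\<in>Rays - F. complex_of_real (\<Sum>i\<in>UNIV. l i * b $ i) * G b w)) = mono (a + p')"
    using split by auto
  moreover have "a + p' = u + real m *\<^sub>R a"
    unfolding p'_def using km by (simp add: of_nat_diff algebra_simps)
  ultimately show "mono (u + real m *\<^sub>R a) \<in> ZM A T \<beta>" by simp
qed

lemma MI: "MIP k"
  by (induction k rule: less_induct) (rule MI_step)

end

context trig2 begin

lemma fin_main:
  assumes finM: "finite (Mgens A T \<beta>)"
  shows "fin_dim_quotient (Mbeta A T \<beta>) (ZM A T \<beta>)"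
proof -
  define D where "D = card A + 2"
  define G0 where "G0 = {g. mono g \<in> Mgens A T \<beta>}"
  have "inj_on mono G0" unfolding inj_on_def mono_def by (metis zero_neq_one)
  moreover have "mono ` G0 \<subseteq> Mgens A T \<beta>" unfolding G0_def by blast
  ultimately have fG0: "finite G0" using finM finite_subset finite_imageD by metis
  define Bset where "Bset = (\<lambda>(g, \<nu>). g + (\<Sum>b\<in>A. real (\<nu> b) *\<^sub>R b)) ` (G0 \<times> (A \<rightarrow>\<^sub>E {..<D}))"
  have fBset: "finite Bset" unfolding Bset_def using fG0 finA by (intro finite_imageI finite_cartesian_product finite_PiE) auto
  define B where "B = mono ` (Bset \<inter> {w. Good A T \<beta> w})"
  have fB: "finite B" unfolding B_def using fBset by simp
  have BM: "B \<subseteq> Mbeta A T \<beta>" unfolding B_def using Good_Mbeta by blast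
  have key: "mono w \<in> ZM A T \<beta>" if gw: "Good A T \<beta> w" and nB: "mono w \<notin> B" for w
  proof -
    obtain g \<nu> S where 2: "mono g \<in> Mgens A T \<beta>" "S \<in> T" "g \<in> conic S" "\<forall>b. \<nu> b \<noteq> 0 \<longrightarrow> b \<in> S"
       "w = g + (\<Sum>b\<in>A. real (\<nu> b) *\<^sub>R b)"
      using gw unfolding Good_def by blast
    have "\<exists>a\<in>A. D \<le> \<nu> a"
    proof (rule ccontr)
      assume "\<not> (\<exists>a\<in>A. D \<le> \<nu> a)"
      then have r: "restrict \<nu> A \<in> A \<rightarrow>\<^sub>E {..<D}" by auto
      have "(\<Sum>b\<in>A. real (restrict \<nu> A b) *\<^sub>R b) = (\<Sum>b\<in>A. real (\<nu> b) *\<^sub>R b)"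
        by (intro sum.cong) auto
      then have "w \<in> Bset" unfolding Bset_def 2(5) using r 2(1) unfolding G0_def
        by (intro image_eqI[of _ _ "(g, restrict \<nu> A)"]) auto
      then show False using nB gw unfolding B_def by blast
    qed
    then obtain a where aA: "a \<in> A" and Da: "D \<le> \<nu> a" by blast
    have aS: "a \<in> S" using 2(4) Da unfolding D_def by auto
    have fS: "finite S" using T_fin 2(2) .
    obtain \<gamma> where \<gamma>: "\<forall>s\<in>S. 0 \<le> \<gamma> s" "g = (\<Sum>s\<in>S. \<gamma> s *\<^sub>R s)" using 2(3) by (rule conicE)
    define F where "F = {s\<in>S. 0 < \<gamma> s + real (\<nu> s)}"
    define c where "c s = \<gamma> s + real (\<nu> s)" for s
    define \<nu>' where "\<nu>' = \<nu>(a := 0)"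
    define u where "u = g + (\<Sum>b\<in>A. real (\<nu>' b) *\<^sub>R b)"
    have FS: "F \<subseteq> S" unfolding F_def by blast
    have aF: "a \<in> F" unfolding F_def using aS \<gamma>(1) Da unfolding D_def by (auto intro: add_nonneg_pos)
    have cpos: "\<forall>s\<in>F. 0 < c s" unfolding F_def c_def by auto
    have nu': "\<forall>b. \<nu>' b \<noteq> 0 \<longrightarrow> b \<in> S" unfolding \<nu>'_def using 2(4) by auto
    have sA: "(\<Sum>b\<in>A. real (\<nu> b) *\<^sub>R b) = real (\<nu> a) *\<^sub>R a + (\<Sum>b\<in>A. real (\<nu>' b) *\<^sub>R b)"
    proof -
      have "(\<Sum>b\<in>A. real (\<nu> b) *\<^sub>R b) = real (\<nu> a) *\<^sub>R a + (\<Sum>b\<in>A - {a}. real (\<nu> b) *\<^sub>R b)"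
        using sum.remove[OF finA aA] by simp
      moreover have "(\<Sum>b\<in>A. real (\<nu>' b) *\<^sub>R b) = (\<Sum>b\<in>A - {a}. real (\<nu> b) *\<^sub>R b)"
      proof -
        have "(\<Sum>b\<in>A. real (\<nu>' b) *\<^sub>R b) = real (\<nu>' a) *\<^sub>R a + (\<Sum>b\<in>A - {a}. real (\<nu>' b) *\<^sub>R b)"
          using sum.remove[OF finA aA] by simp
        also have "\<dots> = (\<Sum>b\<in>A - {a}. real (\<nu> b) *\<^sub>R b)"
          unfolding \<nu>'_def by (auto intro!: sum.cong)
        finally show ?thesis .
      qed
      ultimately show ?thesis by simp
    qed
    have weq: "w = u + real (\<nu> a) *\<^sub>R a" unfolding 2(5) u_def sA by (simp add: algebra_simps)
    have wF: "w = (\<Sum>s\<in>F. c s *\<^sub>R s)"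
    proof -
      have "w = (\<Sum>s\<in>S. \<gamma> s *\<^sub>R s) + (\<Sum>s\<in>S. real (\<nu> s) *\<^sub>R s)"
        unfolding 2(5) \<gamma>(2) sumA_eq[OF 2(2) 2(4)] ..
      also have "\<dots> = (\<Sum>s\<in>S. c s *\<^sub>R s)" unfolding c_def by (simp add: sum.distrib scaleR_add_left)
      also have "\<dots> = (\<Sum>s\<in>F. c s *\<^sub>R s)"
      proof (rule sum.mono_neutral_right[OF fS FS])
        show "\<forall>s\<in>S - F. c s *\<^sub>R s = 0"
        proof
          fix s assume "s \<in> S - F"
          then have "c s = 0" unfolding F_def c_def using \<gamma>(1) by force
          then show "c s *\<^sub>R s = 0" by simp
        qed
      qed
      finally show ?thesis .
    qed
    have uM: "mono u \<in> Mbeta A T \<beta>" unfolding u_def by (rule addrays[OF Mbeta.gen[OF 2(1)] 2(3) 2(2) nu'])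
    have uS: "u \<in> conic S" unfolding u_def using conic_add[OF 2(3) sumA_conic[OF 2(2) nu']] .
    have ua: "ccT T u a" unfolding ccT_def using 2(2) uS conic_elem[OF fS aS] by blast
    have "MIP (card A)" by (rule MI)
    then have "mono (u + real (\<nu> a) *\<^sub>R a) \<in> ZM A T \<beta>"
      unfolding MIP_def
    proof (elim allE impE)
      show "S \<in> T" by fact
      show "F \<subseteq> S" by fact
      show "a \<in> F" by fact
      show "\<forall>s\<in>F. 0 < c s" by fact
      show "u + real (\<nu> a) *\<^sub>R a = (\<Sum>s\<in>F. c s *\<^sub>R s)" using weq wF by simp
      show "mono u \<in> Mbeta A T \<beta>" by fact
      show "ccT T u a" by fact
      show "card A + 1 \<le> \<nu> a" using Da unfolding D_def by simp
      show "real (card A) + 2 \<le> c a" unfolding c_def using Da \<gamma>(1) aS unfolding D_def by force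
      show "card A \<le> card F + card A" by simp
    qed
    then show ?thesis using weq by simp
  qed
  show ?thesis unfolding fin_dim_quotient_def
  proof (intro exI[of _ B] conjI ballI)
    show "finite B" by fact
    show "B \<subseteq> Mbeta A T \<beta>" by fact
    fix m assume m: "m \<in> Mbeta A T \<beta>"
    obtain F c where F: "finite F" "F \<subseteq> mono ` {w. Good A T \<beta> w}" "m = (\<lambda>u. \<Sum>s\<in>F. c s * s u)"
      using Mbeta_span[OF m] by (rule cspanE)
    define b where "b = (\<lambda>u. \<Sum>s\<in>F \<inter> B. c s * s u)"
    have bB: "b \<in> cspan B" unfolding b_def using F(1) by (intro cspanI[of "F \<inter> B" _ _ c]) auto
    have "(\<lambda>u. m u - b u) = (\<lambda>u. \<Sum>s\<in>F - B. c s * s u)"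
    proof
      fix u
      have "(\<Sum>s\<in>F. c s * s u) = (\<Sum>s\<in>F - (F \<inter> B). c s * s u) + (\<Sum>s\<in>F \<inter> B. c s * s u)"
        using sum.subset_diff[of "F \<inter> B" F] F(1) by blast
      moreover have "F - (F \<inter> B) = F - B" by blast
      ultimately show "m u - b u = (\<Sum>s\<in>F - B. c s * s u)" unfolding F(3) b_def by simp
    qed
    also have "\<dots> \<in> ZM A T \<beta>" unfolding ZM_def
    proof (rule cspan_sum)
      show "finite (F - B)" using F(1) by simp
      fix s assume s: "s \<in> F - B"
      then obtain w where "s = mono w" "Good A T \<beta> w" using F(2) by blast
      then show "s \<in> cspan {fmul (fan T) (Zgen A (fan T) i) m |i m. m \<in> Mbeta A T \<beta>}"
        using key s unfolding ZM_def by blast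
    qed
    finally show "\<exists>b\<in>cspan B. (\<lambda>u. m u - b u) \<in> ZM A T \<beta>" using bB by blast
  qed
qed

end

lemma lattice_box_finite:
  "finite {x :: real^'d. (\<forall>i. x $ i \<in> \<int>) \<and> (\<forall>i. \<bar>x $ i\<bar> \<le> C)}"
proof -
  let ?K = "{-\<lceil>C\<rceil>..\<lceil>C\<rceil>}"
  have "{x :: real^'d. (\<forall>i. x $ i \<in> \<int>) \<and> (\<forall>i. \<bar>x $ i\<bar> \<le> C)}
        \<subseteq> (\<lambda>f. \<chi> i. real_of_int (f i)) ` (UNIV \<rightarrow>\<^sub>E ?K)"
  proof
    fix x :: "real^'d" assume x: "x \<in> {x. (\<forall>i. x $ i \<in> \<int>) \<and> (\<forall>i. \<bar>x $ i\<bar> \<le> C)}"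
    have e: "real_of_int \<lfloor>x $ i\<rfloor> = x $ i" for i
    proof -
      have "x $ i \<in> \<int>" using x by blast
      then obtain n where "x $ i = real_of_int n" by (auto elim: Ints_cases)
      then show ?thesis by simp
    qed
    have "\<forall>i. \<lfloor>x $ i\<rfloor> \<in> ?K"
    proof
      fix i
      have "\<bar>x $ i\<bar> \<le> C" using x by blast
      also have "C \<le> real_of_int \<lceil>C\<rceil>" by (rule le_of_int_ceiling)
      finally have c1: "\<bar>x $ i\<bar> \<le> real_of_int \<lceil>C\<rceil>" .
      have "real_of_int \<bar>\<lfloor>x $ i\<rfloor>\<bar> = \<bar>x $ i\<bar>" using e[of i] by (metis of_int_abs)
      then have "real_of_int \<bar>\<lfloor>x $ i\<rfloor>\<bar> \<le> real_of_int \<lceil>C\<rceil>" using c1 by linarith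
      then have "\<bar>\<lfloor>x $ i\<rfloor>\<bar> \<le> \<lceil>C\<rceil>" by (simp only: of_int_le_iff)
      then show "\<lfloor>x $ i\<rfloor> \<in> ?K" by (simp add: abs_le_iff)
    qed
    then have m1: "(\<lambda>i. \<lfloor>x $ i\<rfloor>) \<in> UNIV \<rightarrow>\<^sub>E ?K" by auto
    moreover have m2: "x = (\<chi> i. real_of_int \<lfloor>x $ i\<rfloor>)" unfolding vec_eq_iff by (metis vec_lambda_beta e)
    show "x \<in> (\<lambda>f. \<chi> i. real_of_int (f i)) ` (UNIV \<rightarrow>\<^sub>E ?K)" by (rule image_eqI[OF _ m1]) (rule m2)
  qed
  moreover have "finite ((\<lambda>f. \<chi> i. real_of_int (f i)) ` (UNIV \<rightarrow>\<^sub>E ?K))"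
    by (intro finite_imageI finite_PiE) auto
  ultimately show ?thesis by (rule finite_subset)
qed

context trig begin

lemma Box_finite: "finite (Box T)"
proof -
  let ?C = "\<Sum>a\<in>A. norm a"
  have "Box T \<subseteq> {x :: real^'d. (\<forall>i. x $ i \<in> \<int>) \<and> (\<forall>i. \<bar>x $ i\<bar> \<le> ?C)}"
  proof
    fix v assume v: "v \<in> Box T"
    then obtain S q where S: "S \<in> T" "\<forall>a\<in>S. 0 \<le> q a \<and> q a < 1" "v = (\<Sum>a\<in>S. q a *\<^sub>R a)"
      unfolding Box_def by blast
    have "norm v \<le> (\<Sum>a\<in>S. norm (q a *\<^sub>R a))" unfolding S(3) by (rule norm_sum)
    also have "\<dots> \<le> (\<Sum>a\<in>S. norm a)"
      using S(2) by (intro sum_mono) (auto intro!: mult_left_le_one_le)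
    also have "\<dots> \<le> ?C" using T_sub[OF S(1)] finA by (intro sum_mono2) auto
    finally have "norm v \<le> ?C" .
    then have "\<forall>i. \<bar>v $ i\<bar> \<le> ?C" using component_le_norm_cart order_trans by blast
    moreover have "\<forall>i. v $ i \<in> \<int>" using v unfolding Box_def latN_def by blast
    ultimately show "v \<in> {x. (\<forall>i. x $ i \<in> \<int>) \<and> (\<forall>i. \<bar>x $ i\<bar> \<le> ?C)}" by blast
  qed
  then show ?thesis using lattice_box_finite finite_subset by blast
qed

lemma Mgens_finite: "finite (Mgens A T \<beta>)"
proof -
  have "Mgens A T \<beta> \<subseteq> (\<lambda>(v, xs). fmul (fan T) (mono v) (lprod (fan T) (map mono xs)))
          ` (Box T \<times> {xs. set xs \<subseteq> A \<and> length xs \<le> card A})"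
  proof
    fix m assume "m \<in> Mgens A T \<beta>"
    then obtain v xs where m: "m = fmul (fan T) (mono v) (lprod (fan T) (map mono xs))"
      "v \<in> Box T" "distinct xs" "set xs \<subseteq> A"
      unfolding Mgens_def by blast
    have "length xs \<le> card A" using distinct_card[OF m(3)] card_mono[OF finA m(4)] by simp
    then show "m \<in> (\<lambda>(v, xs). fmul (fan T) (mono v) (lprod (fan T) (map mono xs)))
          ` (Box T \<times> {xs. set xs \<subseteq> A \<and> length xs \<le> card A})"
      using m by (intro image_eqI[of _ _ "(v, xs)"]) auto
  qed
  moreover have "finite (Box T \<times> {xs. set xs \<subseteq> A \<and> length xs \<le> card A})"
    using Box_finite finite_lists_length_le[OF finA] by simp
  ultimately show ?thesis using finite_subset by blast
qed

end

theorem proposition2p16: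
  fixes A :: "(real^'d) set" and T :: "(real^'d) set set"
    and h :: "real^'d" and \<beta> :: "real^'d"
  assumes "finite A" and "A \<subseteq> latN" and "generates_lattice A"
    and "h \<in> latN" and "\<forall>a\<in>A. h \<bullet> a = 1"
    and "is_regular_triangulation A T"
    and "\<beta> \<in> latN"
  shows "fin_dim_quotient (Mbeta A T \<beta>) (ZM A T \<beta>)"
proof -
  have tri: "is_triangulation A T" using assms(6) unfolding is_regular_triangulation_def by blast
  interpret trig A T h using assms(1,5) tri by unfold_locales auto
  have "A \<noteq> {}"
  proof
    assume A0: "A = {}"
    obtain i :: 'd where True by blast
    have "axis i (1::real) \<in> latN" unfolding latN_def by (auto simp: axis_def)
    then obtain c :: "real^'d \<Rightarrow> int" where "axis i (1::real) = (\<Sum>a\<in>A. of_int (c a) *\<^sub>R a)"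
      using assms(3) unfolding generates_lattice_def by blast
    then have "axis i (1::real) = 0" using A0 by simp
    then show False by (simp add: axis_eq_0_iff)
  qed
  then have "convex hull A \<noteq> {}" by simp
  then have Tne: "T \<noteq> {}" using tri unfolding is_triangulation_def by (metis SUP_empty)
  interpret trig2 A T h \<beta> using Tne by unfold_locales
  show ?thesis using fin_main Mgens_finite by blast
qed

end
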